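(* Let $(G,\mathcal J)$ be a generalized Kähler structure on a Courant algebroid $E$, with associated decomposition $E=E_+\oplus E_-$, and for $e\in E$ write $e_\pm$ for its $E_\pm$-components. Then $$[u,\mathcal Jv]_+-\mathcal J[u,v]_+=0\quad\text{for all }u\in\Gamma(E_-),\ v\in\Gamma(E_+),$$ and $$[u,\mathcal Jv]_--\mathcal J[u,v]_-=0\quad\text{for all }u\in\Gamma(E_+),\ v\in\Gamma(E_-).$$
   Context: A Courant algebroid on $M$ is a real vector bundle $E\to M$ with nondegenerate symmetric bilinear form $\langle\cdot,\cdot\rangle$, an $\mathbb R$-bilinear bracket $[\cdot,\cdot]$ on $\Gamma(E)$ (Dorfman bracket) and bundle map $\pi:E\to TM$ such that for $u,v,w\in\Gamma(E)$, $f\in C^\infty(M)$: $[u,[v,w]]=[[u,v],w]+[v,[u,w]]$; $\pi([u,v])=[\pi(u),\pi(v)]$; $[u,fv]=\pi(u)(f)v+f[u,v]$; $\pi(u)\langle v,w\rangle=\langle[u,v],w\rangle+\langle v,[u,w]\rangle$; $2\langle[u,u],v\rangle=\pi(v)\langle u,u\rangle$. A generalized metric is a subbundle $E_+$ on which $\langle\cdot,\cdot\rangle$ is nondegenerate; $E_-=E_+^\perp$, $G=\langle\cdot,\cdot\rangle|_{E_+}-\langle\cdot,\cdot\rangle|_{E_-}$, $G^{\mathrm{end}}=\pm\mathrm{Id}$ on $E_\pm$. A generalized almost complex structure is a $\langle\cdot,\cdot\rangle$-orthogonal $\mathcal J$ with $\mathcal J^2=-\mathrm{Id}$, integrable if $[\mathcal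 Ju,\mathcal Jv]-[u,v]-\mathcal J([\mathcal Ju,v]+[u,\mathcal Jv])=0$. $(G,\mathcal J)$ is generalized almost Hermitian if $G(\mathcal Ju,\mathcal Jv)=G(u,v)$ (then $\mathcal J$ preserves $E_\pm$), and generalized Kähler if moreover $\mathcal J$ and $G^{\mathrm{end}}\mathcal J$ are integrable. *)

theory Defs
  imports "HOL-Analysis.Analysis"
begin

(* Model: M is a type 'm; E is a smooth vector bundle with finite-dimensional fibres
   E x (subspaces of a euclidean space 'v); C is the algebra of smooth functions;
   Gam is the space of smooth sections Gamma(E).  Vector fields are represented as
   derivations of C (so the anchor is a C-linear map Gamma(E) -> Der(C)). *)

definition function_algebra :: "('m \<Rightarrow> real) set \<Rightarrow> bool" where
  "function_algebra C \<longleftrightarrow>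
     (\<forall>c::real. (\<lambda>x. c) \<in> C) \<and>
     (\<forall>f\<in>C. \<forall>g\<in>C. (\<lambda>x. f x + g x) \<in> C \<and> (\<lambda>x. f x * g x) \<in> C)"

definition bundle_sections ::
  "('m \<Rightarrow> real) set \<Rightarrow> ('m \<Rightarrow> 'v::euclidean_space set) \<Rightarrow> ('m \<Rightarrow> 'v) set \<Rightarrow> bool" where
  "bundle_sections C E Gam \<longleftrightarrow>
     (\<forall>x. subspace (E x)) \<and>
     (\<forall>s\<in>Gam. \<forall>x. s x \<in> E x) \<and>
     (\<forall>x. \<forall>e\<in>E x. \<exists>s\<in>Gam. s x = e) \<and>
     (\<lambda>x. 0) \<in> Gam \<and>
     (\<forall>s\<in>Gam. \<forall>t\<in>Gam. (\<lambda>x. s x + t x) \<in> Gam) \<and>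
     (\<forall>f\<in>C. \<forall>s\<in>Gam. (\<lambda>x. f x *\<^sub>R s x) \<in> Gam)"

definition sym_bilinear_on :: "('m \<Rightarrow> 'v::real_vector set) \<Rightarrow> ('m \<Rightarrow> 'v \<Rightarrow> 'v \<Rightarrow> real) \<Rightarrow> bool" where
  "sym_bilinear_on E ip \<longleftrightarrow>
     (\<forall>x. \<forall>a\<in>E x. \<forall>b\<in>E x. \<forall>c\<in>E x. \<forall>r::real.
        ip x (a + b) c = ip x a c + ip x b c \<and>
        ip x (r *\<^sub>R a) c = r * ip x a c \<and>
        ip x a b = ip x b a)"

definition nondegenerate_on :: "('m \<Rightarrow> 'v::real_vector set) \<Rightarrow> ('m \<Rightarrow> 'v \<Rightarrow> 'v \<Rightarrow> real) \<Rightarrow> bool" where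
  "nondegenerate_on S ip \<longleftrightarrow> (\<forall>x. \<forall>a\<in>S x. (\<forall>b\<in>S x. ip x a b = 0) \<longrightarrow> a = 0)"

definition courant_algebroid ::
  "('m \<Rightarrow> real) set \<Rightarrow> ('m \<Rightarrow> 'v::euclidean_space set) \<Rightarrow> ('m \<Rightarrow> 'v) set
   \<Rightarrow> ('m \<Rightarrow> 'v \<Rightarrow> 'v \<Rightarrow> real)
   \<Rightarrow> (('m \<Rightarrow> 'v) \<Rightarrow> ('m \<Rightarrow> 'v) \<Rightarrow> ('m \<Rightarrow> 'v))
   \<Rightarrow> (('m \<Rightarrow> 'v) \<Rightarrow> ('m \<Rightarrow> real) \<Rightarrow> ('m \<Rightarrow> real)) \<Rightarrow> bool" where
  "courant_algebroid C E Gam ip br anc \<longleftrightarrow>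
     function_algebra C \<and> bundle_sections C E Gam \<and>
     sym_bilinear_on E ip \<and> nondegenerate_on E ip \<and>
     (\<forall>u\<in>Gam. \<forall>v\<in>Gam. (\<lambda>x. ip x (u x) (v x)) \<in> C) \<and>
     \<comment> \<open>anchor: C-linear map from sections to derivations of C (vector fields)\<close>
     (\<forall>u\<in>Gam. \<forall>f\<in>C. anc u f \<in> C) \<and>
     (\<forall>u\<in>Gam. \<forall>f\<in>C. \<forall>g\<in>C. \<forall>r::real.
        anc u (\<lambda>x. f x + g x) = (\<lambda>x. anc u f x + anc u g x) \<and>
        anc u (\<lambda>x. r * f x) = (\<lambda>x. r * anc u f x) \<and>
        anc u (\<lambda>x. f x * g x) = (\<lambda>x. f x * anc u g x + g x * anc u f x)) \<and>
     (\<forall>u\<in>Gam. \<forall>v\<in>Gam. \<forall>h\<in>C. \<forall>f\<in>C.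
        anc (\<lambda>x. u x + v x) f = (\<lambda>x. anc u f x + anc v f x) \<and>
        anc (\<lambda>x. h x *\<^sub>R u x) f = (\<lambda>x. h x * anc u f x)) \<and>
     \<comment> \<open>the bracket: R-bilinear on sections\<close>
     (\<forall>u\<in>Gam. \<forall>v\<in>Gam. br u v \<in> Gam) \<and>
     (\<forall>u\<in>Gam. \<forall>v\<in>Gam. \<forall>w\<in>Gam. \<forall>r::real.
        br (\<lambda>x. u x + v x) w = (\<lambda>x. br u w x + br v w x) \<and>
        br w (\<lambda>x. u x + v x) = (\<lambda>x. br w u x + br w v x) \<and>
        br (\<lambda>x. r *\<^sub>R u x) w = (\<lambda>x. r *\<^sub>R br u w x) \<and>
        br w (\<lambda>x. r *\<^sub>R u x) = (\<lambda>x. r *\<^sub>R br w u x)) \<and>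
     \<comment> \<open>Courant algebroid axioms\<close>
     (\<forall>u\<in>Gam. \<forall>v\<in>Gam. \<forall>w\<in>Gam.
        br u (br v w) = (\<lambda>x. br (br u v) w x + br v (br u w) x)) \<and>
     (\<forall>u\<in>Gam. \<forall>v\<in>Gam. \<forall>f\<in>C.
        anc (br u v) f = (\<lambda>x. anc u (anc v f) x - anc v (anc u f) x)) \<and>
     (\<forall>u\<in>Gam. \<forall>v\<in>Gam. \<forall>f\<in>C.
        br u (\<lambda>x. f x *\<^sub>R v x) = (\<lambda>x. anc u f x *\<^sub>R v x + f x *\<^sub>R br u v x)) \<and>
     (\<forall>u\<in>Gam. \<forall>v\<in>Gam. \<forall>w\<in>Gam.
        anc u (\<lambda>x. ip x (v x) (w x)) = (\<lambda>x. ip x (br u v x) (w x) + ip x (v x) (br u w x))) \<and>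
     (\<forall>u\<in>Gam. \<forall>v\<in>Gam.
        (\<lambda>x. 2 * ip x (br u u x) (v x)) = anc v (\<lambda>x. ip x (u x) (u x)))"

definition Eminus :: "('m \<Rightarrow> 'v::real_vector set) \<Rightarrow> ('m \<Rightarrow> 'v \<Rightarrow> 'v \<Rightarrow> real) \<Rightarrow> ('m \<Rightarrow> 'v set) \<Rightarrow> 'm \<Rightarrow> 'v set" where
  "Eminus E ip Ep x = {e \<in> E x. \<forall>a\<in>Ep x. ip x e a = 0}"

definition pplus :: "('m \<Rightarrow> 'v::real_vector set) \<Rightarrow> ('m \<Rightarrow> 'v \<Rightarrow> 'v \<Rightarrow> real) \<Rightarrow> ('m \<Rightarrow> 'v set) \<Rightarrow> 'm \<Rightarrow> 'v \<Rightarrow> 'v" where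
  "pplus E ip Ep x e = (THE a. a \<in> Ep x \<and> e - a \<in> Eminus E ip Ep x)"

definition pminus :: "('m \<Rightarrow> 'v::real_vector set) \<Rightarrow> ('m \<Rightarrow> 'v \<Rightarrow> 'v \<Rightarrow> real) \<Rightarrow> ('m \<Rightarrow> 'v set) \<Rightarrow> 'm \<Rightarrow> 'v \<Rightarrow> 'v" where
  "pminus E ip Ep x e = e - pplus E ip Ep x e"

definition generalized_metric ::
  "('m \<Rightarrow> 'v::real_vector set) \<Rightarrow> ('m \<Rightarrow> 'v) set \<Rightarrow> ('m \<Rightarrow> 'v \<Rightarrow> 'v \<Rightarrow> real) \<Rightarrow> ('m \<Rightarrow> 'v set) \<Rightarrow> bool" where
  "generalized_metric E Gam ip Ep \<longleftrightarrow>
     (\<forall>x. subspace (Ep x) \<and> Ep x \<subseteq> E x) \<and>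
     nondegenerate_on Ep ip \<and>
     \<comment> \<open>smoothness of the subbundle: the E_+ component of a smooth section is smooth\<close>
     (\<forall>s\<in>Gam. (\<lambda>x. pplus E ip Ep x (s x)) \<in> Gam)"

definition Gmet :: "('m \<Rightarrow> 'v::real_vector set) \<Rightarrow> ('m \<Rightarrow> 'v \<Rightarrow> 'v \<Rightarrow> real) \<Rightarrow> ('m \<Rightarrow> 'v set) \<Rightarrow> 'm \<Rightarrow> 'v \<Rightarrow> 'v \<Rightarrow> real" where
  "Gmet E ip Ep x a b = ip x (pplus E ip Ep x a) (pplus E ip Ep x b) - ip x (pminus E ip Ep x a) (pminus E ip Ep x b)"

definition Gend :: "('m \<Rightarrow> 'v::real_vector set) \<Rightarrow> ('m \<Rightarrow> 'v \<Rightarrow> 'v \<Rightarrow> real) \<Rightarrow> ('m \<Rightarrow> 'v set) \<Rightarrow> 'm \<Rightarrow> 'v \<Rightarrow> 'v" where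
  "Gend E ip Ep x a = pplus E ip Ep x a - pminus E ip Ep x a"

definition gen_almost_complex ::
  "('m \<Rightarrow> 'v::real_vector set) \<Rightarrow> ('m \<Rightarrow> 'v) set \<Rightarrow> ('m \<Rightarrow> 'v \<Rightarrow> 'v \<Rightarrow> real) \<Rightarrow> ('m \<Rightarrow> 'v \<Rightarrow> 'v) \<Rightarrow> bool" where
  "gen_almost_complex E Gam ip J \<longleftrightarrow>
     (\<forall>x. \<forall>a\<in>E x. \<forall>b\<in>E x. \<forall>r::real.
        J x a \<in> E x \<and> J x (a + b) = J x a + J x b \<and> J x (r *\<^sub>R a) = r *\<^sub>R J x a \<and>
        J x (J x a) = - a \<and> ip x (J x a) (J x b) = ip x a b) \<and>
     (\<forall>s\<in>Gam. (\<lambda>x. J x (s x)) \<in> Gam)"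

definition integrable ::
  "('m \<Rightarrow> 'v) set \<Rightarrow> (('m \<Rightarrow> 'v::real_vector) \<Rightarrow> ('m \<Rightarrow> 'v) \<Rightarrow> ('m \<Rightarrow> 'v)) \<Rightarrow> ('m \<Rightarrow> 'v \<Rightarrow> 'v) \<Rightarrow> bool" where
  "integrable Gam br K \<longleftrightarrow>
     (\<forall>u\<in>Gam. \<forall>v\<in>Gam. \<forall>x.
        br (\<lambda>y. K y (u y)) (\<lambda>y. K y (v y)) x - br u v x
        - K x (br (\<lambda>y. K y (u y)) v x + br u (\<lambda>y. K y (v y)) x) = 0)"

definition generalized_kahler ::
  "('m \<Rightarrow> real) set \<Rightarrow> ('m \<Rightarrow> 'v::euclidean_space set) \<Rightarrow> ('m \<Rightarrow> 'v) set
   \<Rightarrow> ('m \<Rightarrow> 'v \<Rightarrow> 'v \<Rightarrow> real)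
   \<Rightarrow> (('m \<Rightarrow> 'v) \<Rightarrow> ('m \<Rightarrow> 'v) \<Rightarrow> ('m \<Rightarrow> 'v))
   \<Rightarrow> (('m \<Rightarrow> 'v) \<Rightarrow> ('m \<Rightarrow> real) \<Rightarrow> ('m \<Rightarrow> real))
   \<Rightarrow> ('m \<Rightarrow> 'v set) \<Rightarrow> ('m \<Rightarrow> 'v \<Rightarrow> 'v) \<Rightarrow> bool" where
  "generalized_kahler C E Gam ip br anc Ep J \<longleftrightarrow>
     courant_algebroid C E Gam ip br anc \<and>
     generalized_metric E Gam ip Ep \<and>
     gen_almost_complex E Gam ip J \<and>
     (\<forall>x. \<forall>a\<in>E x. \<forall>b\<in>E x. Gmet E ip Ep x (J x a) (J x b) = Gmet E ip Ep x a b) \<and>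
     integrable Gam br J \<and>
     integrable Gam br (\<lambda>x a. Gend E ip Ep x (J x a))"

end

theory Submission
  imports Defs
begin

lemma alg:
  fixes pA :: "'v::real_vector"
  assumes e1: "(-1::real) *\<^sub>R pA - pB - X = 0" and e2: "pA - pB - (jc + jd) = 0"
    and X: "X = - jc + jd"
  shows "jd = - pB"
proof -
  have "((-1::real) *\<^sub>R pA - pB - (- jc + jd)) + (pA - pB - (jc + jd)) = -(2 *\<^sub>R (jd + pB))"
    by (simp add: algebra_simps scaleR_2)
  hence "2 *\<^sub>R (jd + pB) = 0" using e1 e2 X by simp
  hence "jd + pB = 0" by simp
  thus ?thesis by (simp add: eq_neg_iff_add_eq_0)
qed

locale gkp =
  fixes E :: "'m \<Rightarrow> 'v::euclidean_space set" and ip :: "'m \<Rightarrow> 'v \<Rightarrow> 'v \<Rightarrow> real"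
    and Ep :: "'m \<Rightarrow> 'v set" and x :: 'm
  assumes sS: "subspace (E x)" and sP: "subspace (Ep x)" and PS: "Ep x \<subseteq> E x"
  and bil: "\<forall>a\<in>E x. \<forall>b\<in>E x. \<forall>c\<in>E x. \<forall>r::real. ip x (a + b) c = ip x a c + ip x b c \<and>
        ip x (r *\<^sub>R a) c = r * ip x a c \<and> ip x a b = ip x b a"
  and ndP: "\<forall>a\<in>Ep x. (\<forall>b\<in>Ep x. ip x a b = 0) \<longrightarrow> a = 0"
  and ndS: "\<forall>a\<in>E x. (\<forall>b\<in>E x. ip x a b = 0) \<longrightarrow> a = 0"
begin

lemma add1: "a\<in>E x \<Longrightarrow> b\<in>E x \<Longrightarrow> c\<in>E x \<Longrightarrow> ip x (a+b) c = ip x a c + ip x b c"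
  using bil by blast
lemma scale1: "a\<in>E x \<Longrightarrow> c\<in>E x \<Longrightarrow> ip x (r *\<^sub>R a) c = r * ip x a c"
  using bil by blast
lemma symm: "a\<in>E x \<Longrightarrow> b\<in>E x \<Longrightarrow> ip x a b = ip x b a"
  using bil by blast
lemma add2: "a\<in>E x \<Longrightarrow> b\<in>E x \<Longrightarrow> c\<in>E x \<Longrightarrow> ip x a (b+c) = ip x a b + ip x a c"
  by (metis add1 symm sS subspace_add)
lemma scale2: "a\<in>E x \<Longrightarrow> c\<in>E x \<Longrightarrow> ip x c (r *\<^sub>R a) = r * ip x c a"
  by (metis scale1 symm sS subspace_mul)
lemma minus1: "a\<in>E x \<Longrightarrow> c\<in>E x \<Longrightarrow> ip x (- a) c = - ip x a c"
  using scale1[of a c "-1"] by simp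
lemma minus2: "a\<in>E x \<Longrightarrow> c\<in>E x \<Longrightarrow> ip x c (- a) = - ip x c a"
  using scale2[of a c "-1"] by simp
lemma diff1: "a\<in>E x \<Longrightarrow> b\<in>E x \<Longrightarrow> c\<in>E x \<Longrightarrow> ip x (a-b) c = ip x a c - ip x b c"
  using add1[of a "-b" c] minus1[of b c] sS subspace_neg by fastforce
lemma diff2: "a\<in>E x \<Longrightarrow> b\<in>E x \<Longrightarrow> c\<in>E x \<Longrightarrow> ip x c (a-b) = ip x c a - ip x c b"
  using add2[of c a "-b"] minus2[of b c] sS subspace_neg by fastforce
lemma zero1: "c\<in>E x \<Longrightarrow> ip x 0 c = 0"
  using scale1[of c c 0] by simp

lemma zero2: "c\<in>E x \<Longrightarrow> ip x c 0 = 0"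
  using scale2[of c c 0] by simp

lemma PE: "a \<in> Ep x \<Longrightarrow> a \<in> E x" using PS by blast

abbreviation "Mi \<equiv> Eminus E ip Ep x"

lemma ME: "a \<in> Mi \<Longrightarrow> a \<in> E x" unfolding Eminus_def by blast

lemma sM: "subspace Mi"
  unfolding subspace_def Eminus_def
  using sS PE add1 scale1 zero1 by (auto intro: subspace_add subspace_mul subspace_0)

lemma span_orth:
  assumes e: "e \<in> E x" and T: "T \<subseteq> Ep x" and o: "\<forall>b\<in>T. ip x e b = 0" and q: "q \<in> span T"
  shows "ip x e q = 0"
proof -
  have "q \<in> E x \<and> ip x e q = 0"
  proof (rule span_induct[OF q, where P="\<lambda>q. q \<in> E x \<and> ip x e q = 0"])
    show "subspace {q. q \<in> E x \<and> ip x e q = 0}"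
      unfolding subspace_def using sS e add2 scale2 symm zero2
      by (auto intro: subspace_add subspace_mul subspace_0)
    show "\<And>y. y \<in> T \<Longrightarrow> y \<in> E x \<and> ip x e y = 0" using T o PE by blast
  qed
  thus ?thesis by simp
qed

lemma exist: assumes a: "a \<in> E x" shows "\<exists>p\<in>Ep x. a - p \<in> Mi"
proof -
  obtain Bs where Bs: "Bs \<subseteq> Ep x" "independent Bs" "Ep x \<subseteq> span Bs" "card Bs = dim (Ep x)"
    using basis_exists by blast
  have fin: "finite Bs" using Bs(2) independent_imp_finite by blast
  have spB: "span Bs = Ep x"
    using Bs(1,3) sP by (metis span_eq_iff span_mono subset_antisym)
  define f where "f e = (\<Sum>b\<in>Bs. ip x e b *\<^sub>R b)" for e
  obtain g where g: "linear g" "\<forall>b\<in>Bs. g b = f b"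
    using linear_independent_extend[OF Bs(2)] by blast
  have gf: "e \<in> Ep x \<and> g e = f e" if "e \<in> Ep x" for e
  proof (rule span_induct[where P="\<lambda>e. e \<in> Ep x \<and> g e = f e"])
    show "e \<in> span Bs" using that spB by simp
    show "\<And>y. y \<in> Bs \<Longrightarrow> y \<in> Ep x \<and> g y = f y" using g Bs(1) by blast
    show "subspace {e. e \<in> Ep x \<and> g e = f e}"
    proof (unfold subspace_def, intro conjI allI impI ballI)
      show "0 \<in> {e. e \<in> Ep x \<and> g e = f e}"
      proof -
        have "f 0 = 0" unfolding f_def using zero1 PE Bs(1) by (simp add: subset_iff)
        thus ?thesis using sP subspace_0 linear_0[OF g(1)] by simp
      qed
    next
      fix y z assume y: "y \<in> {e. e \<in> Ep x \<and> g e = f e}" and z: "z \<in> {e. e \<in> Ep x \<and> g e = f e}"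
      have "f (y + z) = f y + f z"
        unfolding f_def sum.distrib[symmetric]
      proof (rule sum.cong[OF refl])
        fix b assume "b \<in> Bs"
        hence "b \<in> E x" using Bs(1) PE by blast
        thus "ip x (y + z) b *\<^sub>R b = ip x y b *\<^sub>R b + ip x z b *\<^sub>R b"
          using y z PE add1 by (simp add: scaleR_add_left)
      qed
      thus "y + z \<in> {e. e \<in> Ep x \<and> g e = f e}"
        using y z sP subspace_add linear_add[OF g(1)] by auto
    next
      fix c :: real and y assume y: "y \<in> {e. e \<in> Ep x \<and> g e = f e}"
      have "f (c *\<^sub>R y) = c *\<^sub>R f y"
        unfolding f_def using y PE Bs(1) scale1
        by (auto simp: scaleR_sum_right intro!: sum.cong)
      thus "c *\<^sub>R y \<in> {e. e \<in> Ep x \<and> g e = f e}"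
        using y sP subspace_mul linear_scale[OF g(1)] by auto
    qed
  qed
  have inj: "inj_on g (span (Ep x))"
  proof (rule inj_onI)
    fix y z assume y: "y \<in> span (Ep x)" and z: "z \<in> span (Ep x)" and e: "g y = g z"
    have y': "y \<in> Ep x" and z': "z \<in> Ep x" using y z sP span_eq_iff[of "Ep x"] by metis+
    have d: "y - z \<in> Ep x" using y' z' sP subspace_diff by blast
    have "g (y - z) = 0" using e linear_diff[OF g(1)] by simp
    hence "f (y - z) = 0" using gf[OF d] by simp
    hence "\<forall>b\<in>Bs. ip x (y - z) b = 0"
      using independentD[OF Bs(2) fin order_refl, of "\<lambda>b. ip x (y - z) b"] unfolding f_def by blast
    hence "\<forall>q\<in>Ep x. ip x (y - z) q = 0"
      using span_orth[of "y - z" Bs] d PE Bs(1) spB by blast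
    hence "y - z = 0" using ndP d by blast
    thus "y = z" by simp
  qed
  have im: "g ` Ep x \<subseteq> Ep x"
  proof
    fix w assume "w \<in> g ` Ep x"
    then obtain e where e: "e \<in> Ep x" "w = g e" by blast
    have "f e \<in> Ep x" unfolding f_def
      using Bs(1) sP by (intro subspace_sum) (auto intro: subspace_mul)
    thus "w \<in> Ep x" using gf[OF e(1)] e(2) by simp
  qed
  have eq: "g ` Ep x = Ep x"
    by (rule subspace_dim_equal[OF linear_subspace_image[OF g(1) sP] sP im])
       (simp add: dim_image_eq[OF g(1) inj])
  have fa: "f a \<in> Ep x" unfolding f_def
    using Bs(1) sP by (intro subspace_sum) (auto intro: subspace_mul)
  then obtain p where p: "p \<in> Ep x" "g p = f a" using eq by (metis imageE)
  have "f p = f a" using gf[OF p(1)] p(2) by simp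
  hence "(\<Sum>b\<in>Bs. (ip x a b - ip x p b) *\<^sub>R b) = 0"
    unfolding f_def by (simp add: scaleR_diff_left sum_subtractf)
  hence "\<forall>b\<in>Bs. ip x a b - ip x p b = 0"
    using independentD[OF Bs(2) fin order_refl, of "\<lambda>b. ip x a b - ip x p b"] by blast
  hence o: "\<forall>b\<in>Bs. ip x (a - p) b = 0" using diff1 a PE p(1) Bs(1) by auto
  have ap: "a - p \<in> E x" using a PE p(1) sS subspace_diff by blast
  have "\<forall>q\<in>Ep x. ip x (a - p) q = 0"
    using span_orth[OF ap Bs(1) o] spB by blast
  thus ?thesis using p(1) ap unfolding Eminus_def by blast
qed


lemma uniq: assumes "p1 \<in> Ep x" "p2 \<in> Ep x" "a - p1 \<in> Mi" "a - p2 \<in> Mi" shows "p1 = p2"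
proof -
  have d: "p1 - p2 \<in> Ep x" using assms sP subspace_diff by blast
  have "\<forall>b\<in>Ep x. ip x (p1 - p2) b = 0"
  proof
    fix b assume b: "b \<in> Ep x"
    have "p1 - p2 = (a - p2) - (a - p1)" by simp
    hence "ip x (p1 - p2) b = ip x (a - p2) b - ip x (a - p1) b"
      using diff1 ME assms b PE by metis
    thus "ip x (p1 - p2) b = 0" using assms(3,4) b unfolding Eminus_def by simp
  qed
  thus ?thesis using ndP d by (metis eq_iff_diff_eq_0)
qed

abbreviation "pp \<equiv> pplus E ip Ep x"
abbreviation "pm \<equiv> pminus E ip Ep x"
abbreviation "Ge \<equiv> Gend E ip Ep x"

lemma pp_eq: "p \<in> Ep x \<Longrightarrow> a - p \<in> Mi \<Longrightarrow> pp a = p"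
  unfolding pplus_def by (rule the_equality) (auto intro: uniq)

lemma pp_in: "a \<in> E x \<Longrightarrow> pp a \<in> Ep x \<and> a - pp a \<in> Mi"
  using exist pp_eq by metis

lemma ppP: "a \<in> E x \<Longrightarrow> pp a \<in> Ep x" using pp_in by blast
lemma ppE: "a \<in> E x \<Longrightarrow> pp a \<in> E x" using pp_in PE by blast
lemma pmM: "a \<in> E x \<Longrightarrow> pm a \<in> Mi" using pp_in unfolding pminus_def by blast
lemma pmE: "a \<in> E x \<Longrightarrow> pm a \<in> E x" using pmM ME by blast
lemma pp_pm: "pp a + pm a = a" unfolding pminus_def by simp

lemma pp_add: "a \<in> E x \<Longrightarrow> b \<in> E x \<Longrightarrow> pp (a + b) = pp a + pp b"
proof (rule pp_eq)
  assume a: "a \<in> E x" and b: "b \<in> E x"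
  show "pp a + pp b \<in> Ep x" using ppP a b sP subspace_add by blast
  have "a + b - (pp a + pp b) = (a - pp a) + (b - pp b)" by simp
  thus "a + b - (pp a + pp b) \<in> Mi" using pp_in a b sM subspace_add by metis
qed

lemma pp_scale: "a \<in> E x \<Longrightarrow> pp (r *\<^sub>R a) = r *\<^sub>R pp a"
proof (rule pp_eq)
  assume a: "a \<in> E x"
  show "r *\<^sub>R pp a \<in> Ep x" using ppP a sP subspace_mul by blast
  have "r *\<^sub>R a - r *\<^sub>R pp a = r *\<^sub>R (a - pp a)" by (simp add: scaleR_diff_right)
  thus "r *\<^sub>R a - r *\<^sub>R pp a \<in> Mi" using pp_in a sM subspace_mul by metis
qed

lemma pp_neg: "a \<in> E x \<Longrightarrow> pp (- a) = - pp a"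
  using pp_scale[of a "-1"] by simp

lemma pp_diff: "a \<in> E x \<Longrightarrow> b \<in> E x \<Longrightarrow> pp (a - b) = pp a - pp b"
  using pp_add[of a "-b"] pp_neg[of b] sS subspace_neg by fastforce

lemma pp_onP: "a \<in> Ep x \<Longrightarrow> pp a = a"
  by (rule pp_eq) (use sM subspace_0 in auto)

lemma pp_onM: "a \<in> Mi \<Longrightarrow> pp a = 0"
  by (rule pp_eq) (use sP subspace_0 in auto)

lemma pm_add: "a \<in> E x \<Longrightarrow> b \<in> E x \<Longrightarrow> pm (a + b) = pm a + pm b"
  unfolding pminus_def using pp_add by simp
lemma pm_scale: "a \<in> E x \<Longrightarrow> pm (r *\<^sub>R a) = r *\<^sub>R pm a"
  unfolding pminus_def using pp_scale by (simp add: scaleR_diff_right)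
lemma pm_neg: "a \<in> E x \<Longrightarrow> pm (- a) = - pm a"
  unfolding pminus_def using pp_neg by simp
lemma pm_diff: "a \<in> E x \<Longrightarrow> b \<in> E x \<Longrightarrow> pm (a - b) = pm a - pm b"
  unfolding pminus_def using pp_diff by simp

lemma Ge_E: "a \<in> E x \<Longrightarrow> Ge a \<in> E x"
  unfolding Gend_def using ppE pmE sS subspace_diff by blast

lemma Ge_neg: "a \<in> E x \<Longrightarrow> Ge (- a) = - Ge a"
  unfolding Gend_def using pp_neg pm_neg by simp

lemma pp_Ge: "a \<in> E x \<Longrightarrow> pp (Ge a) = pp a"
  unfolding Gend_def using pp_diff ppE pmE pp_onP ppP pp_onM pmM by simp

lemma pm_Ge: "a \<in> E x \<Longrightarrow> pm (Ge a) = - pm a"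
proof -
  assume a: "a \<in> E x"
  have "pm (Ge a) = Ge a - pp (Ge a)" unfolding pminus_def by simp
  also have "\<dots> = - pm a" using pp_Ge[OF a] unfolding Gend_def by simp
  finally show ?thesis .
qed

lemma Ge_ip: assumes a: "a \<in> E x" and b: "b \<in> E x"
  shows "ip x (Ge a) b = Gmet E ip Ep x a b"
proof -
  have 1: "ip x (pp a) (pm b) = 0"
  proof -
    have "ip x (pm b) (pp a) = 0" using pmM[OF b] ppP[OF a] unfolding Eminus_def by blast
    thus ?thesis using symm[OF ppE[OF a] pmE[OF b]] by simp
  qed
  have 2: "ip x (pm a) (pp b) = 0"
    using pmM[OF a] ppP[OF b] unfolding Eminus_def by blast
  have "ip x (Ge a) b = ip x (pp a - pm a) (pp b + pm b)"
    unfolding Gend_def using pp_pm[of b] by simp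
  also have "\<dots> = ip x (pp a) (pp b) + ip x (pp a) (pm b) - (ip x (pm a) (pp b) + ip x (pm a) (pm b))"
  proof -
    have pb: "pp b + pm b \<in> E x" using ppE pmE a b sS subspace_add by blast
    show ?thesis using diff1[OF ppE[OF a] pmE[OF a] pb] add2[OF ppE[OF a] ppE[OF b] pmE[OF b]]
      add2[OF pmE[OF a] ppE[OF b] pmE[OF b]] by simp
  qed
  finally show ?thesis unfolding Gmet_def using 1 2 by simp
qed

end

locale gkj = gkp E ip Ep x for E :: "'m \<Rightarrow> 'v::euclidean_space set" and ip Ep and x :: 'm +
  fixes J :: "'m \<Rightarrow> 'v \<Rightarrow> 'v"
  assumes Jall: "\<forall>a\<in>E x. \<forall>b\<in>E x. \<forall>r::real.
        J x a \<in> E x \<and> J x (a + b) = J x a + J x b \<and> J x (r *\<^sub>R a) = r *\<^sub>R J x a \<and>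
        J x (J x a) = - a \<and> ip x (J x a) (J x b) = ip x a b"
  and Ginv: "\<forall>a\<in>E x. \<forall>b\<in>E x. Gmet E ip Ep x (J x a) (J x b) = Gmet E ip Ep x a b"
begin

lemma JE: "a \<in> E x \<Longrightarrow> J x a \<in> E x" using Jall by blast
lemma Jadd: "a \<in> E x \<Longrightarrow> b \<in> E x \<Longrightarrow> J x (a + b) = J x a + J x b" using Jall by blast
lemma Jscale: "a \<in> E x \<Longrightarrow> J x (r *\<^sub>R a) = r *\<^sub>R J x a" using Jall by blast
lemma JJ: "a \<in> E x \<Longrightarrow> J x (J x a) = - a" using Jall by blast
lemma Jip: "a \<in> E x \<Longrightarrow> b \<in> E x \<Longrightarrow> ip x (J x a) (J x b) = ip x a b" using Jall by blast
lemma Jneg: "a \<in> E x \<Longrightarrow> J x (- a) = - J x a" using Jscale[of a "-1"] by simp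
lemma Jdiff: "a \<in> E x \<Longrightarrow> b \<in> E x \<Longrightarrow> J x (a - b) = J x a - J x b"
  using Jadd[of a "-b"] Jneg[of b] sS subspace_neg by fastforce

lemma GeJ: assumes a: "a \<in> E x" shows "Ge (J x a) = J x (Ge a)"
proof -
  have "\<forall>b\<in>E x. ip x (Ge (J x a) - J x (Ge a)) b = 0"
  proof
    fix b assume b: "b \<in> E x"
    have "ip x (Ge (J x a)) b = Gmet E ip Ep x (J x a) b" using Ge_ip JE a b by blast
    also have "\<dots> = Gmet E ip Ep x (J x (J x a)) (J x b)" using Ginv JE a b by metis
    also have "\<dots> = ip x (Ge (- a)) (J x b)" using Ge_ip JJ a b JE sS subspace_neg by metis
    also have "\<dots> = - ip x (Ge a) (J x b)" using Ge_neg a minus1 Ge_E JE b by simp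
    finally have 1: "ip x (Ge (J x a)) b = - ip x (Ge a) (J x b)" .
    have "ip x (J x (Ge a)) b = ip x (J x (J x (Ge a))) (J x b)" using Jip JE Ge_E a b by metis
    also have "\<dots> = - ip x (Ge a) (J x b)" using JJ minus1 Ge_E JE a b by simp
    finally have 2: "ip x (J x (Ge a)) b = - ip x (Ge a) (J x b)" .
    show "ip x (Ge (J x a) - J x (Ge a)) b = 0"
      using diff1 1 2 Ge_E JE a b by simp
  qed
  moreover have "Ge (J x a) - J x (Ge a) \<in> E x" using Ge_E JE a sS subspace_diff by blast
  ultimately show ?thesis using ndS by auto
qed

lemma J_P: assumes a: "a \<in> Ep x" shows "J x a \<in> Ep x"
proof -
  have aE: "a \<in> E x" using a PE by blast
  have "Ge a = a" unfolding Gend_def pminus_def using pp_onP[OF a] by simp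
  hence g: "Ge (J x a) = J x a" using GeJ aE by simp
  define c where "c = J x a"
  have "pp c - (c - pp c) = c" using g unfolding c_def Gend_def pminus_def by simp
  hence "2 *\<^sub>R pp c = 2 *\<^sub>R c" by (simp add: algebra_simps scaleR_2)
  hence "pp c = c" by simp
  thus ?thesis using ppP JE aE unfolding c_def by metis
qed

lemma J_M: assumes a: "a \<in> Mi" shows "J x a \<in> Mi"
proof -
  have aE: "a \<in> E x" using a ME by blast
  have "Ge a = - a" unfolding Gend_def pminus_def using pp_onM[OF a] by simp
  hence g: "Ge (J x a) = - J x a" using GeJ aE Jneg by simp
  define c where "c = J x a"
  have "pp c - (c - pp c) = - c" using g unfolding c_def Gend_def pminus_def by simp
  hence "2 *\<^sub>R pp c = 0" by (simp add: algebra_simps scaleR_2)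
  hence "pp c = 0" by simp
  hence "pm c = c" unfolding pminus_def by simp
  thus ?thesis using pmM JE aE unfolding c_def by metis
qed

lemma ppJ: assumes a: "a \<in> E x" shows "pp (J x a) = J x (pp a)"
proof (rule pp_eq)
  show "J x (pp a) \<in> Ep x" using J_P ppP a by blast
  have "J x a - J x (pp a) = J x (a - pp a)" using Jdiff a ppE by simp
  thus "J x a - J x (pp a) \<in> Mi" using J_M pp_in a by metis
qed

lemma pmJ: assumes a: "a \<in> E x" shows "pm (J x a) = J x (pm a)"
  unfolding pminus_def using ppJ a Jdiff ppE by simp

lemma cE_add: "a\<in>E x \<Longrightarrow> b\<in>E x \<Longrightarrow> a + b \<in> E x" using sS subspace_add by blast
lemma cE_diff: "a\<in>E x \<Longrightarrow> b\<in>E x \<Longrightarrow> a - b \<in> E x" using sS subspace_diff by blast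
lemma cE_scale: "a\<in>E x \<Longrightarrow> r *\<^sub>R a \<in> E x" using sS subspace_mul by blast

lemma cE_neg: "a\<in>E x \<Longrightarrow> - a \<in> E x" using sS subspace_neg by blast
lemmas cl = cE_neg cE_add cE_diff cE_scale JE Ge_E ppE pmE

lemma Ge_onM: "a \<in> Mi \<Longrightarrow> Ge a = - a"
  unfolding Gend_def pminus_def using pp_onM by simp
lemma Ge_onP: "a \<in> Ep x \<Longrightarrow> Ge a = a"
  unfolding Gend_def pminus_def using pp_onP by simp

lemma key1:
  assumes AE: "A \<in> E x" and BE: "B \<in> E x" and CE: "C \<in> E x" and DE: "D \<in> E x"
  and h1: "(-1::real) *\<^sub>R A - B - Ge (J x ((-1::real) *\<^sub>R C + D)) = 0"
  and h2: "A - B - J x (C + D) = 0"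
  shows "pp D - J x (pp B) = 0"
proof -
  have "pp ((-1::real) *\<^sub>R A - B - Ge (J x ((-1::real) *\<^sub>R C + D))) = 0"
    using h1 pp_onP sP subspace_0 by metis
  hence e1: "(-1::real) *\<^sub>R pp A - pp B - (- J x (pp C) + J x (pp D)) = 0"
    using AE BE CE DE by (simp add: cl pp_neg Jneg Jdiff pp_diff pp_add pp_scale pp_Ge ppJ Jadd Jscale)
  have "pp (A - B - J x (C + D)) = 0"
    using h2 pp_onP sP subspace_0 by metis
  hence e2: "pp A - pp B - (J x (pp C) + J x (pp D)) = 0"
    using AE BE CE DE by (simp add: cl pp_neg Jneg Jdiff pp_diff pp_add pp_scale ppJ Jadd Jscale)
  have jd: "J x (pp D) = - pp B" by (rule alg[OF e1 e2 refl])
  have "pp D = - J x (J x (pp D))" using JJ ppE DE by simp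
  also have "\<dots> = J x (pp B)" using jd Jneg ppE BE by simp
  finally show ?thesis by simp
qed

lemma key2:
  assumes AE: "A \<in> E x" and BE: "B \<in> E x" and CE: "C \<in> E x" and DE: "D \<in> E x"
  and h1: "(-1::real) *\<^sub>R A - B - Ge (J x (C + (-1::real) *\<^sub>R D)) = 0"
  and h2: "A - B - J x (C + D) = 0"
  shows "pm D - J x (pm B) = 0"
proof -
  have "pm ((-1::real) *\<^sub>R A - B - Ge (J x (C + (-1::real) *\<^sub>R D))) = 0"
    using h1 unfolding pminus_def using pp_onP sP subspace_0 by (metis diff_zero)
  hence e1: "(-1::real) *\<^sub>R pm A - pm B - (- J x (pm C) + J x (pm D)) = 0"
    using AE BE CE DE by (simp add: cl pm_neg Jneg Jdiff pm_diff pm_add pm_scale pm_Ge pmJ Jadd Jscale)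
  have "pm (A - B - J x (C + D)) = 0"
    using h2 unfolding pminus_def using pp_onP sP subspace_0 by (metis diff_zero)
  hence e2: "pm A - pm B - (J x (pm C) + J x (pm D)) = 0"
    using AE BE CE DE by (simp add: cl pm_neg Jneg Jdiff pm_diff pm_add pm_scale pmJ Jadd Jscale)
  have jd: "J x (pm D) = - pm B" by (rule alg[OF e1 e2 refl])
  have "pm D = - J x (J x (pm D))" using JJ pmE DE by simp
  also have "\<dots> = J x (pm B)" using jd Jneg pmE BE by simp
  finally show ?thesis by simp
qed

end

theorem lemma5p1:
  fixes C :: "('m \<Rightarrow> real) set"
    and E :: "'m \<Rightarrow> 'v::euclidean_space set"
    and Gam :: "('m \<Rightarrow> 'v) set"
    and ip :: "'m \<Rightarrow> 'v \<Rightarrow> 'v \<Rightarrow> real"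
    and br :: "('m \<Rightarrow> 'v) \<Rightarrow> ('m \<Rightarrow> 'v) \<Rightarrow> ('m \<Rightarrow> 'v)"
    and anc :: "('m \<Rightarrow> 'v) \<Rightarrow> ('m \<Rightarrow> real) \<Rightarrow> ('m \<Rightarrow> real)"
    and Ep :: "'m \<Rightarrow> 'v set"
    and J :: "'m \<Rightarrow> 'v \<Rightarrow> 'v"
  assumes "generalized_kahler C E Gam ip br anc Ep J"
  shows "(\<forall>u\<in>Gam. \<forall>v\<in>Gam. (\<forall>x. u x \<in> Eminus E ip Ep x) \<longrightarrow> (\<forall>x. v x \<in> Ep x) \<longrightarrow>
            (\<forall>x. pplus E ip Ep x (br u (\<lambda>y. J y (v y)) x) - J x (pplus E ip Ep x (br u v x)) = 0))
       \<and> (\<forall>u\<in>Gam. \<forall>v\<in>Gam. (\<forall>x. u x \<in> Ep x) \<longrightarrow> (\<forall>x. v x \<in> Eminus E ip Ep x) \<longrightarrow>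
            (\<forall>x. pminus E ip Ep x (br u (\<lambda>y. J y (v y)) x) - J x (pminus E ip Ep x (br u v x)) = 0))"
proof -
  note gk = assms[unfolded generalized_kahler_def]
  have CA: "courant_algebroid C E Gam ip br anc" and GM: "generalized_metric E Gam ip Ep"
    and AC: "gen_almost_complex E Gam ip J"
    and GI: "\<forall>x. \<forall>a\<in>E x. \<forall>b\<in>E x. Gmet E ip Ep x (J x a) (J x b) = Gmet E ip Ep x a b"
    and IJ: "integrable Gam br J" and IK: "integrable Gam br (\<lambda>x a. Gend E ip Ep x (J x a))"
    using gk by auto
  have BS: "bundle_sections C E Gam" using CA unfolding courant_algebroid_def by blast
  have SB: "sym_bilinear_on E ip" and ND: "nondegenerate_on E ip"
    using CA unfolding courant_algebroid_def by auto
  have loc: "gkj E ip Ep x J" for x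
    unfolding gkj_def gkp_def gkj_axioms_def
  proof (intro conjI)
    show "subspace (E x)" using BS unfolding bundle_sections_def by blast
    show "subspace (Ep x)" "Ep x \<subseteq> E x" using GM unfolding generalized_metric_def by auto
    show "\<forall>a\<in>E x. \<forall>b\<in>E x. \<forall>c\<in>E x. \<forall>r::real. ip x (a + b) c = ip x a c + ip x b c \<and>
        ip x (r *\<^sub>R a) c = r * ip x a c \<and> ip x a b = ip x b a"
      using SB unfolding sym_bilinear_on_def by blast
    show "\<forall>a\<in>Ep x. (\<forall>b\<in>Ep x. ip x a b = 0) \<longrightarrow> a = 0"
      using GM unfolding generalized_metric_def nondegenerate_on_def by blast
    show "\<forall>a\<in>E x. (\<forall>b\<in>E x. ip x a b = 0) \<longrightarrow> a = 0"
      using ND unfolding nondegenerate_on_def by blast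
    show "\<forall>a\<in>E x. \<forall>b\<in>E x. \<forall>r::real.
        J x a \<in> E x \<and> J x (a + b) = J x a + J x b \<and> J x (r *\<^sub>R a) = r *\<^sub>R J x a \<and>
        J x (J x a) = - a \<and> ip x (J x a) (J x b) = ip x a b"
      using AC unfolding gen_almost_complex_def by blast
    show "\<forall>a\<in>E x. \<forall>b\<in>E x. Gmet E ip Ep x (J x a) (J x b) = Gmet E ip Ep x a b"
      using GI by blast
  qed
  have memE: "s x \<in> E x" if "s \<in> Gam" for s x using BS that unfolding bundle_sections_def by blast
  have brG: "br u v \<in> Gam" if "u \<in> Gam" "v \<in> Gam" for u v
    using CA that unfolding courant_algebroid_def by blast
  have JG: "(\<lambda>y. J y (u y)) \<in> Gam" if "u \<in> Gam" for u
    using AC that unfolding gen_almost_complex_def by blast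
  have brs: "br (\<lambda>y. r *\<^sub>R u y) w = (\<lambda>y. r *\<^sub>R br u w y) \<and> br w (\<lambda>y. r *\<^sub>R u y) = (\<lambda>y. r *\<^sub>R br w u y)"
    if "u \<in> Gam" "w \<in> Gam" for u w and r :: real
  proof -
    have "\<forall>u\<in>Gam. \<forall>v\<in>Gam. \<forall>w\<in>Gam. \<forall>r::real.
        br (\<lambda>x. r *\<^sub>R u x) w = (\<lambda>x. r *\<^sub>R br u w x) \<and>
        br w (\<lambda>x. r *\<^sub>R u x) = (\<lambda>x. r *\<^sub>R br w u x)"
      using CA unfolding courant_algebroid_def by blast
    thus ?thesis using that by blast
  qed
  have NJ: "br (\<lambda>y. J y (u y)) (\<lambda>y. J y (v y)) x - br u v x
        - J x (br (\<lambda>y. J y (u y)) v x + br u (\<lambda>y. J y (v y)) x) = 0"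
    if "u \<in> Gam" "v \<in> Gam" for u v x using IJ that unfolding integrable_def by blast
  have NK: "br (\<lambda>y. Gend E ip Ep y (J y (u y))) (\<lambda>y. Gend E ip Ep y (J y (v y))) x - br u v x
        - Gend E ip Ep x (J x (br (\<lambda>y. Gend E ip Ep y (J y (u y))) v x + br u (\<lambda>y. Gend E ip Ep y (J y (v y))) x)) = 0"
    if "u \<in> Gam" "v \<in> Gam" for u v x using IK that unfolding integrable_def by blast
  show ?thesis
  proof (intro conjI ballI impI allI)
    fix u v x assume u: "u \<in> Gam" and v: "v \<in> Gam" and hu: "\<forall>x. u x \<in> Eminus E ip Ep x"
      and hv: "\<forall>x. v x \<in> Ep x"
    have Ku: "(\<lambda>y. Gend E ip Ep y (J y (u y))) = (\<lambda>y. (-1::real) *\<^sub>R J y (u y))"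
      using gkj.Ge_onM[OF loc] gkj.J_M[OF loc] hu by simp
    have Kv: "(\<lambda>y. Gend E ip Ep y (J y (v y))) = (\<lambda>y. J y (v y))"
      using gkj.Ge_onP[OF loc] gkj.J_P[OF loc] hv by simp
    have h1: "(-1::real) *\<^sub>R br (\<lambda>y. J y (u y)) (\<lambda>y. J y (v y)) x - br u v x
       - Gend E ip Ep x (J x ((-1::real) *\<^sub>R br (\<lambda>y. J y (u y)) v x + br u (\<lambda>y. J y (v y)) x)) = 0"
    proof -
      have e1: "br (\<lambda>y. (-1::real) *\<^sub>R J y (u y)) (\<lambda>y. J y (v y)) = (\<lambda>y. (-1::real) *\<^sub>R br (\<lambda>y. J y (u y)) (\<lambda>y. J y (v y)) y)"
        using brs[OF JG[OF u] JG[OF v], of "-1"] by blast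
      have e2: "br (\<lambda>y. (-1::real) *\<^sub>R J y (u y)) v = (\<lambda>y. (-1::real) *\<^sub>R br (\<lambda>y. J y (u y)) v y)"
        using brs[OF JG[OF u] v, of "-1"] by blast
      show ?thesis using NK[OF u v, of x] unfolding Ku Kv unfolding e1 e2 .
    qed
    show "pplus E ip Ep x (br u (\<lambda>y. J y (v y)) x) - J x (pplus E ip Ep x (br u v x)) = 0"
      by (rule gkj.key1[OF loc memE[OF brG[OF JG[OF u] JG[OF v]]] memE[OF brG[OF u v]]
          memE[OF brG[OF JG[OF u] v]] memE[OF brG[OF u JG[OF v]]] h1 NJ[OF u v]])
  next
    fix u v x assume u: "u \<in> Gam" and v: "v \<in> Gam" and hu: "\<forall>x. u x \<in> Ep x"
      and hv: "\<forall>x. v x \<in> Eminus E ip Ep x"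
    have Ku: "(\<lambda>y. Gend E ip Ep y (J y (u y))) = (\<lambda>y. J y (u y))"
      using gkj.Ge_onP[OF loc] gkj.J_P[OF loc] hu by simp
    have Kv: "(\<lambda>y. Gend E ip Ep y (J y (v y))) = (\<lambda>y. (-1::real) *\<^sub>R J y (v y))"
      using gkj.Ge_onM[OF loc] gkj.J_M[OF loc] hv by simp
    have h1: "(-1::real) *\<^sub>R br (\<lambda>y. J y (u y)) (\<lambda>y. J y (v y)) x - br u v x
       - Gend E ip Ep x (J x (br (\<lambda>y. J y (u y)) v x + (-1::real) *\<^sub>R br u (\<lambda>y. J y (v y)) x)) = 0"
    proof -
      have e1: "br (\<lambda>y. J y (u y)) (\<lambda>y. (-1::real) *\<^sub>R J y (v y)) = (\<lambda>y. (-1::real) *\<^sub>R br (\<lambda>y. J y (u y)) (\<lambda>y. J y (v y)) y)"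
        using brs[OF JG[OF v] JG[OF u], of "-1"] by blast
      have e2: "br u (\<lambda>y. (-1::real) *\<^sub>R J y (v y)) = (\<lambda>y. (-1::real) *\<^sub>R br u (\<lambda>y. J y (v y)) y)"
        using brs[OF JG[OF v] u, of "-1"] by blast
      show ?thesis using NK[OF u v, of x] unfolding Ku Kv unfolding e1 e2 .
    qed
    show "pminus E ip Ep x (br u (\<lambda>y. J y (v y)) x) - J x (pminus E ip Ep x (br u v x)) = 0"
      by (rule gkj.key2[OF loc memE[OF brG[OF JG[OF u] JG[OF v]]] memE[OF brG[OF u v]]
          memE[OF brG[OF JG[OF u] v]] memE[OF brG[OF u JG[OF v]]] h1 NJ[OF u v]])
  qed
qed

end
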